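(* Let $0<\kappa<\frac13$ and define $g:\mathbb{R}\to\mathbb{R}$ by $g(t)=\sqrt{1-\kappa t^2}$ if $0\leq t<1$, $g(t)=\frac{\kappa}{t\sqrt{1-\kappa}}+\frac{1-2\kappa}{\sqrt{1-\kappa}}$ if $t\geq1$, and $g(t)=g(-t)$ for $t<0$. Let $G(t)=\int_0^tg(s)\,ds$ and $G^{-1}$ its inverse. Then: (1) $\lim_{t\to0}\frac{G^{-1}(t)}{t}=1$; (2) $\lim_{t\to\infty}\frac{G^{-1}(t)}{t}=\frac{\sqrt{1-\kappa}}{1-2\kappa}$; (3) $t\leq G^{-1}(t)\leq 3t$ for all $t\geq0$; (4) $-\frac32\leq\frac{t}{g(t)}g'(t)\leq0$ for all $t\geq0$.
   Context: The function $g$ is $C^1$, even, with values in $(\frac{1-2\kappa}{\sqrt{1-\kappa}},1]$, and $G$ is a strictly increasing odd bijection of $\mathbb{R}$. *)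

theory Defs
  imports "HOL-Analysis.Analysis"
begin

definition gk :: "real \<Rightarrow> real \<Rightarrow> real" where
  "gk \<kappa> t = (let s = \<bar>t\<bar> in
     if s < 1 then sqrt (1 - \<kappa> * s\<^sup>2)
     else \<kappa> / (s * sqrt (1 - \<kappa>)) + (1 - 2 * \<kappa>) / sqrt (1 - \<kappa>))"

definition Gk :: "real \<Rightarrow> real \<Rightarrow> real" where
  "Gk \<kappa> t = (if 0 \<le> t then integral {0..t} (gk \<kappa>) else - integral {t..0} (gk \<kappa>))"

end

theory Submission
  imports Defs
begin

definition "h1 k x = sqrt (1 - k * x\<^sup>2)"
definition "h2 k x = k / (x * sqrt (1 - k)) + (1 - 2 * k) / sqrt (1 - k)"
definition "gd k t = (if t < 1 then - k * t / sqrt (1 - k * t\<^sup>2) else - k / (t\<^sup>2 * sqrt (1 - k)))"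

lemma h1_deriv:
  assumes "0 < k" "k < 1/3" "\<bar>t\<bar> \<le> 1"
  shows "(h1 k has_real_derivative (- k * t / sqrt (1 - k * t\<^sup>2))) (at t)"
proof -
  have "t\<^sup>2 \<le> 1" using assms by (simp add: abs_square_le_1)
  then have "k * t\<^sup>2 \<le> k" using assms by (simp add: mult_left_le)
  then have pos: "1 - k * t\<^sup>2 > 0" using assms by linarith
  have i: "((\<lambda>x. 1 - k * x\<^sup>2) has_real_derivative - (2 * k * t)) (at t)"
    by (auto intro!: derivative_eq_intros)
  have "((\<lambda>x. sqrt (1 - k * x\<^sup>2)) has_real_derivative
      inverse (sqrt (1 - k * t\<^sup>2)) / 2 * (- (2 * k * t))) (at t)"
    by (rule DERIV_chain2[OF DERIV_real_sqrt[OF pos] i])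
  then show ?thesis unfolding h1_def
    by (rule DERIV_cong) (simp add: field_simps)
qed

lemma h2_deriv:
  assumes "0 < k" "k < 1/3" "t > 0"
  shows "(h2 k has_real_derivative (- k / (t\<^sup>2 * sqrt (1 - k)))) (at t)"
proof -
  have r: "sqrt (1-k) > 0" using assms by simp
  have tne: "t \<noteq> 0" using assms by simp
  have "((\<lambda>x. k / sqrt (1 - k) * inverse x + (1 - 2 * k) / sqrt (1 - k)) has_real_derivative
     (k / sqrt (1 - k) * (- (inverse t ^ Suc (Suc 0))) + 0)) (at t)"
    by (rule DERIV_add[OF DERIV_cmult[OF DERIV_inverse[OF tne]] DERIV_const])
  moreover have "(\<lambda>x. k / sqrt (1 - k) * inverse x + (1 - 2 * k) / sqrt (1 - k)) = h2 k"
    by (rule ext) (simp add: h2_def divide_inverse)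
  ultimately have "(h2 k has_real_derivative (k / sqrt (1 - k) * (- (inverse t ^ Suc (Suc 0))) + 0)) (at t)"
    by simp
  then show ?thesis
    by (rule DERIV_cong) (use assms r in \<open>simp add: field_simps power2_eq_square\<close>)
qed

lemma h12: assumes "0 < k" "k < 1/3" shows "h2 k 1 = h1 k 1"
proof -
  have s: "sqrt (1-k) > 0" using assms by simp
  have "h2 k 1 = (k + (1 - 2 * k)) / sqrt (1-k)" unfolding h2_def by (simp add: add_divide_distrib[symmetric])
  also have "\<dots> = (1 - k) / sqrt (1-k)" by simp
  also have "\<dots> = sqrt (1-k)" using assms by (simp add: real_div_sqrt)
  finally show ?thesis unfolding h1_def by simp
qed

lemma gk_even: "gk k (- t) = gk k t"
  by (simp add: gk_def)

lemma gk_nonneg: "t \<ge> 0 \<Longrightarrow> gk k t = (if t < 1 then h1 k t else h2 k t)"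
  by (simp add: gk_def h1_def h2_def)

lemma gk_bounds:
  assumes "0 < k" "k < 1/3"
  shows "1/3 \<le> gk k t \<and> gk k t \<le> 1"
proof -
  define s where "s = \<bar>t\<bar>"
  have s0: "s \<ge> 0" unfolding s_def by simp
  define r where "r = sqrt (1 - k)"
  have r0: "r > 0" unfolding r_def using assms by simp
  have r1: "r \<le> 1" unfolding r_def using assms by simp
  have rr: "r * r = 1 - k" unfolding r_def using assms by simp
  show ?thesis
  proof (cases "s < 1")
    case True
    have "s\<^sup>2 \<le> 1" using True s0 by (simp add: abs_square_le_1)
    then have "k * s\<^sup>2 \<le> k" using assms by (simp add: mult_left_le)
    moreover have "k * s\<^sup>2 \<ge> 0" using assms by simp
    ultimately have a: "1/9 \<le> 1 - k * s\<^sup>2" "1 - k * s\<^sup>2 \<le> 1" using assms by linarith+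
    have "sqrt (1/9) \<le> sqrt (1 - k * s\<^sup>2)" using a(1) by (rule real_sqrt_le_mono)
    moreover have "sqrt (1/9::real) = 1/3" by (simp add: real_sqrt_divide)
    moreover have "sqrt (1 - k * s\<^sup>2) \<le> 1" using a by simp
    ultimately show ?thesis using True by (simp add: gk_def s_def)
  next
    case False
    have g: "gk k t = k / (s * r) + (1 - 2*k) / r" using False by (simp add: gk_def s_def r_def)
    have a1: "k / (s * r) \<ge> 0" using assms s0 r0 by simp
    have a2: "(1 - 2*k) / r \<ge> 1 - 2*k" using assms r0 r1
      by (simp add: le_divide_eq mult_left_le)
    have b1: "k / (s * r) \<le> k / r"
      using assms r0 False by (simp add: divide_left_mono mult_le_cancel_right1 frac_le)
    have b2: "k / r + (1 - 2*k)/r = r" using r0 rr by (simp add: field_simps)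
    show ?thesis using g a1 a2 b1 b2 r1 assms by linarith
  qed
qed

lemma gk_deriv_nonneg:
  assumes "0 < k" "k < 1/3" "t \<ge> 0"
  shows "(gk k has_real_derivative gd k t) (at t)"
proof -
  consider "t < 1" | "t > 1" | "t = 1" by linarith
  then show ?thesis
  proof cases
    case 1
    have "(h1 k has_real_derivative gd k t) (at t)"
      using h1_deriv[OF assms(1,2), of t] 1 assms by (simp add: gd_def)
    then show ?thesis
    proof (rule has_field_derivative_transform_within_open[where S="{-1<..<1}"])
      show "t \<in> {-1<..<1}" using 1 assms by simp
      fix x :: real assume "x \<in> {-1<..<1}"
      then show "h1 k x = gk k x" by (auto simp: gk_def h1_def abs_less_iff)
    qed simp
  next
    case 2
    have "(h2 k has_real_derivative gd k t) (at t)"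
      using h2_deriv[OF assms(1,2), of t] 2 by (simp add: gd_def)
    then show ?thesis
    proof (rule has_field_derivative_transform_within_open[where S="{1<..}"])
      show "t \<in> {1<..}" using 2 by simp
      fix x :: real assume "x \<in> {1<..}"
      then show "h2 k x = gk k x" by (auto simp: gk_def h2_def)
    qed simp
  next
    case 3
    have d: "gd k 1 = - k / sqrt (1 - k)" by (simp add: gd_def)
    have D1: "(h1 k has_real_derivative gd k 1) (at 1)"
      using h1_deriv[OF assms(1,2), of 1] d by simp
    have D2: "(h2 k has_real_derivative gd k 1) (at 1)"
      using h2_deriv[OF assms(1,2), of 1] d by simp
    have E1: "(gk k has_real_derivative gd k 1) (at 1 within {..1})"
    proof (rule has_field_derivative_transform_within[where d=1])
      show "(h1 k has_real_derivative gd k 1) (at 1 within {..1})"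
        using D1 by (rule has_field_derivative_at_within)
      fix x :: real assume x: "x \<in> {..1}" "dist x 1 < 1"
      show "h1 k x = gk k x"
      proof (cases "x = 1")
        case True then show ?thesis using h12[OF assms(1,2)] by (simp add: gk_nonneg)
      next
        case False
        then have "0 \<le> x" "x < 1" using x by (auto simp: dist_real_def)
        then show ?thesis by (simp add: gk_nonneg)
      qed
    qed auto
    have E2: "(gk k has_real_derivative gd k 1) (at 1 within {1..})"
    proof (rule has_field_derivative_transform_within[where d=1])
      show "(h2 k has_real_derivative gd k 1) (at 1 within {1..})"
        using D2 by (rule has_field_derivative_at_within)
      fix x :: real assume x: "x \<in> {1..}" "dist x 1 < 1"
      then show "h2 k x = gk k x" by (simp add: gk_nonneg)
    qed auto
    have U: "{..1} \<union> {1..} = (UNIV::real set)" by auto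
    have "(gk k has_real_derivative gd k 1) (at 1 within ({..1} \<union> {1..}))"
      using E1 E2 unfolding has_field_derivative_iff Lim_within_Un by simp
    then show ?thesis using 3 U by simp
  qed
qed

lemma gk_deriv_ex:
  assumes "0 < k" "k < 1/3"
  shows "\<exists>D. (gk k has_real_derivative D) (at t)"
proof (cases "t \<ge> 0")
  case True then show ?thesis using gk_deriv_nonneg[OF assms] by blast
next
  case False
  have "(gk k has_real_derivative gd k (- t)) (at (- (t)))"
    using gk_deriv_nonneg[OF assms, of "-t"] False by simp
  then have "((\<lambda>x. gk k (- x)) has_real_derivative - gd k (- t)) (at t)"
    using DERIV_mirror[of "gk k" "gd k (- t)" t] by simp
  then show ?thesis unfolding gk_even by blast
qed

lemma gk_cont:
  assumes "0 < k" "k < 1/3"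
  shows "isCont (gk k) t"
  using gk_deriv_ex[OF assms, of t] DERIV_isCont by blast

lemma gk_cont_on:
  assumes "0 < k" "k < 1/3"
  shows "continuous_on S (gk k)"
  using gk_cont[OF assms] by (simp add: continuous_at_imp_continuous_on)


lemma Gk_deriv:
  assumes "0 < k" "k < 1/3"
  shows "(Gk k has_real_derivative gk k x) (at x)"
proof -
  define a where "a = min x 0 - 1"
  define b where "b = max x 0 + 1"
  have ab: "a < x" "x < b" "a < 0" "0 < b" unfolding a_def b_def by auto
  have cont: "continuous_on {a..b} (gk k)" using gk_cont_on[OF assms] .
  have "((\<lambda>u. integral {a..u} (gk k)) has_real_derivative gk k x) (at x within {a..b})"
    by (rule integral_has_real_derivative[OF cont]) (use ab in auto)
  moreover have "at x within {a..b} = at x"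
    by (rule at_within_interior) (use ab in simp)
  ultimately have D: "((\<lambda>u. integral {a..u} (gk k)) has_real_derivative gk k x) (at x)" by simp
  have "((\<lambda>u. integral {a..u} (gk k) - integral {a..0} (gk k)) has_real_derivative gk k x - 0) (at x)"
    by (rule DERIV_diff[OF D DERIV_const])
  then have D2: "((\<lambda>u. integral {a..u} (gk k) - integral {a..0} (gk k)) has_real_derivative gk k x) (at x)"
    by simp
  show ?thesis
  proof (rule has_field_derivative_transform_within_open[OF D2, where S="{a<..}"])
    show "x \<in> {a<..}" using ab by simp
    fix u assume u: "u \<in> {a<..}"
    have int: "\<And>c d. gk k integrable_on {c..d}"
      by (rule integrable_continuous_real) (rule gk_cont_on[OF assms])
    show "integral {a..u} (gk k) - integral {a..0} (gk k) = Gk k u"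
    proof (cases "0 \<le> u")
      case True
      have "integral {a..0} (gk k) + integral {0..u} (gk k) = integral {a..u} (gk k)"
        by (rule Henstock_Kurzweil_Integration.integral_combine) (use ab True int in auto)
      then show ?thesis using True by (simp add: Gk_def)
    next
      case False
      have "integral {a..u} (gk k) + integral {u..0} (gk k) = integral {a..0} (gk k)"
        by (rule Henstock_Kurzweil_Integration.integral_combine) (use ab False u int in auto)
      then show ?thesis using False by (simp add: Gk_def)
    qed
  qed simp
qed

lemma Gk_mvt:
  assumes "0 < k" "k < 1/3" "a \<le> b"
  shows "(b - a) / 3 \<le> Gk k b - Gk k a \<and> Gk k b - Gk k a \<le> b - a"
proof (cases "a = b")
  case True then show ?thesis by simp
next
  case False
  then have "a < b" using assms by simp
  from MVT2[OF this, of "Gk k" "gk k"] Gk_deriv[OF assms(1,2)]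
  obtain z where z: "Gk k b - Gk k a = (b - a) * gk k z" by blast
  have "1/3 \<le> gk k z" "gk k z \<le> 1" using gk_bounds[OF assms(1,2)] by auto
  moreover have "b - a > 0" using \<open>a < b\<close> by simp
  ultimately have "(b - a) * (1/3) \<le> (b - a) * gk k z" "(b - a) * gk k z \<le> (b - a) * 1"
    by (intro mult_left_mono; simp)+
  then show ?thesis using z by simp
qed

lemma Gk0: "Gk k 0 = 0" by (simp add: Gk_def)

lemma Gk_inj:
  assumes "0 < k" "k < 1/3"
  shows "inj (Gk k)"
proof (rule injI)
  fix x y assume e: "Gk k x = Gk k y"
  show "x = y"
  proof (rule ccontr)
    assume "x \<noteq> y"
    then consider "x < y" | "y < x" by linarith
    then show False
    proof cases
      case 1 then show False using Gk_mvt[OF assms, of x y] e by simp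
    next
      case 2 then show False using Gk_mvt[OF assms, of y x] e by simp
    qed
  qed
qed

lemma Gk_surj:
  assumes "0 < k" "k < 1/3"
  shows "surj (Gk k)"
proof -
  have cont: "\<And>x. isCont (Gk k) x" using Gk_deriv[OF assms] DERIV_isCont by blast
  have "y \<in> range (Gk k)" for y
  proof (cases "y \<ge> 0")
    case True
    have "Gk k 0 \<le> y" using True by (simp add: Gk0)
    moreover have "y \<le> Gk k (3 * y)" using Gk_mvt[OF assms, of 0 "3*y"] True by (simp add: Gk0)
    ultimately obtain x where "Gk k x = y"
      using IVT[of "Gk k" 0 y "3*y"] True cont by auto
    then show ?thesis by auto
  next
    case False
    have "y \<le> Gk k 0" using False by (simp add: Gk0)
    moreover have "Gk k (3 * y) \<le> y" using Gk_mvt[OF assms, of "3*y" 0] False by (simp add: Gk0)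
    ultimately obtain x where "Gk k x = y"
      using IVT[of "Gk k" "3*y" y 0] False cont by auto
    then show ?thesis by auto
  qed
  then show ?thesis by auto
qed


lemma invG:
  assumes "0 < k" "k < 1/3"
  shows "Gk k (inv (Gk k) y) = y" "inv (Gk k) (Gk k x) = x"
  using Gk_surj[OF assms] Gk_inj[OF assms] by (auto simp: surj_f_inv_f inv_f_f)

lemma part3:
  assumes "0 < k" "k < 1/3" "t \<ge> 0"
  shows "t \<le> inv (Gk k) t \<and> inv (Gk k) t \<le> 3 * t"
proof -
  define x where "x = inv (Gk k) t"
  have e: "Gk k x = t" unfolding x_def using invG[OF assms(1,2)] by simp
  have x0: "x \<ge> 0"
  proof (rule ccontr)
    assume "\<not> x \<ge> 0"
    then show False using Gk_mvt[OF assms(1,2), of x 0] e assms(3) by (simp add: Gk0)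
  qed
  have "x / 3 \<le> t \<and> t \<le> x" using Gk_mvt[OF assms(1,2) x0] e by (simp add: Gk0)
  then show ?thesis unfolding x_def[symmetric] by linarith
qed

lemma Gk_cont:
  assumes "0 < k" "k < 1/3"
  shows "isCont (Gk k) x"
  using Gk_deriv[OF assms] DERIV_isCont by blast

lemma part1:
  assumes "0 < k" "k < 1/3"
  shows "((\<lambda>t. inv (Gk k) t / t) \<longlongrightarrow> 1) (at 0)"
proof -
  have i0: "inv (Gk k) 0 = 0" using invG(2)[OF assms, of 0] by (simp add: Gk0)
  have cont: "isCont (inv (Gk k)) (Gk k 0)"
    by (rule isCont_inverse_function2[of "-1" 0 1])
       (use invG[OF assms] Gk_cont[OF assms] in auto)
  have g0: "gk k 0 = 1" by (simp add: gk_def)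
  have "DERIV (inv (Gk k)) 0 :> inverse (gk k 0)"
  proof (rule DERIV_inverse_function[where a="-1" and b=1])
    show "DERIV (Gk k) (inv (Gk k) 0) :> gk k 0" using Gk_deriv[OF assms] i0 by simp
  qed (use g0 invG[OF assms] cont Gk0 in auto)
  then have "DERIV (inv (Gk k)) 0 :> 1" using g0 by simp
  then show ?thesis unfolding has_field_derivative_iff using i0 by simp
qed

lemma G_asym:
  assumes "0 < k" "k < 1/3"
  shows "((\<lambda>x. Gk k x / x) \<longlongrightarrow> (1 - 2*k) / sqrt (1 - k)) at_top"
proof -
  define r where "r = sqrt (1 - k)"
  define c where "c = (1 - 2*k) / r"
  have r0: "r > 0" unfolding r_def using assms by simp
  define f where "f u = Gk k u - (k / r * ln u + c * u)" for u
  have fconst: "f x = f 1" if x: "x \<ge> 1" for x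
  proof (cases "x = 1")
    case False
    then have "1 < x" using x by simp
    have "\<exists>z. 1 < z \<and> z < x \<and> f x - f 1 = (x - 1) * (gk k z - (k / r * inverse z + c * 1))"
    proof (rule MVT2[OF \<open>1 < x\<close>])
      fix u :: real assume u: "1 \<le> u" "u \<le> x"
      show "DERIV f u :> gk k u - (k / r * inverse u + c * 1)"
        unfolding f_def
        by (rule DERIV_diff[OF Gk_deriv[OF assms] DERIV_add[OF DERIV_cmult[OF DERIV_ln] DERIV_cmult[OF DERIV_ident]]])
           (use u in simp)
    qed
    then obtain z where z: "1 < z" "f x - f 1 = (x - 1) * (gk k z - (k / r * inverse z + c * 1))"
      by blast
    have "gk k z = k / r * inverse z + c" using z(1)
      by (simp add: gk_nonneg h2_def r_def c_def divide_inverse)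
    then show ?thesis using z by simp
  qed simp
  have ev: "eventually (\<lambda>x. (f 1) * inverse x + k / r * (ln x / x) + c = Gk k x / x) at_top"
    using eventually_ge_at_top[of "1::real"]
  proof eventually_elim
    case (elim x)
    have "Gk k x = f 1 + (k / r * ln x + c * x)" using fconst[OF elim] unfolding f_def by simp
    then show ?case using elim by (simp add: field_simps)
  qed
  have "((\<lambda>x. (f 1) * inverse x + k / r * (ln x / x) + c) \<longlongrightarrow> f 1 * 0 + k / r * 0 + c) at_top"
    by (intro tendsto_intros tendsto_inverse_0_at_top filterlim_ident ln_x_over_x_tendsto_0)
  then have "((\<lambda>x. (f 1) * inverse x + k / r * (ln x / x) + c) \<longlongrightarrow> c) at_top" by simp
  then have "((\<lambda>x. Gk k x / x) \<longlongrightarrow> c) at_top" using ev by (rule Lim_transform_eventually)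
  then show ?thesis unfolding c_def r_def .
qed

lemma part2:
  assumes "0 < k" "k < 1/3"
  shows "((\<lambda>t. inv (Gk k) t / t) \<longlongrightarrow> sqrt (1 - k) / (1 - 2 * k)) at_top"
proof -
  have lim: "filterlim (inv (Gk k)) at_top at_top"
  proof (rule filterlim_at_top_mono[OF filterlim_ident])
    show "eventually (\<lambda>x. x \<le> inv (Gk k) x) at_top"
      using eventually_ge_at_top[of "0::real"] by eventually_elim (use part3[OF assms] in auto)
  qed
  have "((\<lambda>t. Gk k (inv (Gk k) t) / inv (Gk k) t) \<longlongrightarrow> (1 - 2*k) / sqrt (1 - k)) at_top"
    using filterlim_compose[OF G_asym[OF assms] lim] by simp
  then have "((\<lambda>t. t / inv (Gk k) t) \<longlongrightarrow> (1 - 2*k) / sqrt (1 - k)) at_top"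
    using invG(1)[OF assms] by simp
  moreover have "(1 - 2*k) / sqrt (1 - k) \<noteq> 0" using assms by simp
  ultimately have "((\<lambda>t. inverse (t / inv (Gk k) t)) \<longlongrightarrow> inverse ((1 - 2*k) / sqrt (1 - k))) at_top"
    by (rule tendsto_inverse)
  then show ?thesis by simp
qed

lemma part4:
  assumes "0 < k" "k < 1/3" "t \<ge> 0"
  shows "-3/2 \<le> t / gk k t * deriv (gk k) t \<and> t / gk k t * deriv (gk k) t \<le> 0"
proof -
  have d: "deriv (gk k) t = gd k t" using gk_deriv_nonneg[OF assms] by (rule DERIV_imp_deriv)
  show ?thesis
  proof (cases "t < 1")
    case True
    define q where "q = sqrt (1 - k * t\<^sup>2)"
    have "t\<^sup>2 \<le> 1" using True assms by (simp add: abs_square_le_1)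
    then have kt: "k * t\<^sup>2 \<le> k" using assms by (simp add: mult_left_le)
    have kt0: "k * t\<^sup>2 \<ge> 0" using assms by simp
    have pos: "1 - k * t\<^sup>2 > 0" using kt assms by linarith
    have qq: "q * q = 1 - k * t\<^sup>2" unfolding q_def using pos by simp
    have q0: "q > 0" unfolding q_def using pos by simp
    have e: "t / gk k t * deriv (gk k) t = - (k * t\<^sup>2) / (1 - k * t\<^sup>2)"
    proof -
      have "gk k t = q" "gd k t = - k * t / q" using True assms
        by (simp_all add: gk_nonneg gd_def h1_def q_def)
      then have "t / gk k t * deriv (gk k) t = - (k * t\<^sup>2) / (q * q)"
        unfolding d using q0 by (simp add: power2_eq_square field_simps)
      then show ?thesis using qq by simp
    qed
    have "k * t\<^sup>2 / (1 - k * t\<^sup>2) \<le> 3/2"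
    proof -
      have "3/2 * (1 - k * t\<^sup>2) = 3/2 - 3/2 * (k * t\<^sup>2)" by (simp add: algebra_simps)
      then have "k * t\<^sup>2 \<le> 3/2 * (1 - k * t\<^sup>2)" using kt assms by linarith
      then show ?thesis by (simp add: pos_divide_le_eq[OF pos])
    qed
    moreover have "k * t\<^sup>2 / (1 - k * t\<^sup>2) \<ge> 0" using pos kt0 by simp
    ultimately show ?thesis unfolding e by simp
  next
    case False
    define r where "r = sqrt (1 - k)"
    have r0: "r > 0" unfolding r_def using assms by simp
    have g: "gk k t = k / (t * r) + (1 - 2*k) / r" using False assms by (simp add: gk_nonneg h2_def r_def)
    have tgr: "t * gk k t * r = k + (1 - 2*k) * t" using False r0 unfolding g by (simp add: field_simps)
    have e: "t / gk k t * deriv (gk k) t = - (k / (t * gk k t * r))"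
      using False assms r0 gk_bounds[OF assms(1,2), of t] unfolding d
      by (simp add: gd_def r_def[symmetric] power2_eq_square field_simps)
    have "k / (t * gk k t * r) \<le> 1"
      unfolding tgr using assms False by (simp add: divide_le_eq)
    moreover have "k / (t * gk k t * r) \<ge> 0" unfolding tgr using assms False by simp
    ultimately show ?thesis unfolding e by linarith
  qed
qed

theorem lemma4p1:
  fixes \<kappa> :: real
  assumes "0 < \<kappa>" and "\<kappa> < 1/3"
  shows "((\<lambda>t. inv (Gk \<kappa>) t / t) \<longlongrightarrow> 1) (at 0)
    \<and> ((\<lambda>t. inv (Gk \<kappa>) t / t) \<longlongrightarrow> sqrt (1 - \<kappa>) / (1 - 2 * \<kappa>)) at_top
    \<and> (\<forall>t\<ge>0. t \<le> inv (Gk \<kappa>) t \<and> inv (Gk \<kappa>) t \<le> 3 * t)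
    \<and> (\<forall>t\<ge>0. -3/2 \<le> t / gk \<kappa> t * deriv (gk \<kappa>) t
                \<and> t / gk \<kappa> t * deriv (gk \<kappa>) t \<le> 0)"
  using part1[OF assms] part2[OF assms] part3[OF assms] part4[OF assms] by blast

end
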